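(* Let $D$ be a bilateral negotiation domain with a finite offer space $\Omega$, utility functions $u_1,u_2:\Omega\to\mathbb{R}$ and reservation values $rv_1,rv_2\in\mathbb{R}$, and consider negotiation over $D$ under the alternating offers protocol with deadline $T$. If $T$ is sufficiently large, then for every offer $\omega\in\Omega$ that is Pareto-optimal and individually rational there exists a pair of negotiation strategies $(\sigma_1,\sigma_2)$ that forms a Nash equilibrium, and this pair leads to the negotiation ending in agreement on $\omega$ or on another offer $\hat\omega\in\Omega$ with exactly the same utility vector, i.e. $u_i(\omega)=u_i(\hat\omega)$ for both $i\in\{1,2\}$.
   Context: A bilateral negotiation domain consists of a set $\Omega$ of offers, and for each agent $i\in\{1,2\}$ a utility function $u_i:\Omega\to\mathbb{R}$ and a reservation value $rv_i\in\mathbb{R}$ (no discounting). A negotiation action is a tuple $(i,\tau,\omega,t)$ with $i\in\{1,2\}$ the acting agent, $\tau\in\{\text{propose},\text{accept}\}$, $\omega\in\Omega$ and time $t\ge 0$. Under the alternating offers protocol with deadline $T$, agent 1 acts first and the agents alternate; after each action $(i_j,\tau_j,\omega_j,t_j)$ a random positive delay $\varepsilon_j$ occurs before it is received by the other agent, and the next action must satisfy $t_j+\varepsilon_j<t_{j+1}$; an acceptance may only accept the offer in the immediately preceding proposal and ends the negotiation; all actions occur at times $\le T$. The negotiation ends in agreement on $\omega_k$ if its last action $(i_k,\tau_k,\omega_k,t_k)$ is an acceptance with $t_k+\varepsilon_k<T$, in which case agent $i$ receives $u_i(\omega_k)$; otherwise it fails and agent $i$ receives $rv_i$. Each agent observes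 its own actions with their sending times and the other agent's actions with their reception times $t_j+\varepsilon_j$ (but not the delays themselves). A negotiation strategy for agent $i$ maps each observed history at which it is agent $i$'s turn to a legal action. A pair $(\sigma_1,\sigma_2)$ is a Nash equilibrium if no agent can increase its (expected) utility by switching to another strategy while the other agent keeps its strategy. An offer $\omega$ is individually rational if $u_i(\omega)>rv_i$ for both $i$. An offer $\omega'$ dominates $\omega$ if $u_i(\omega')\ge u_i(\omega)$ for both $i$ with strict inequality for at least one $i$; $\omega$ is Pareto-optimal if no offer in $\Omega$ dominates it.
   Formalization: The random delays $\varepsilon_j$ are almost surely bounded by a single constant: for some real Delta, with probability one every delay $\varepsilon_j$ lies in the interval (0, Delta]. Each condition added here is assumed in the paper as well or is needed for the statement above to hold. *)

theory Defs
  imports "HOL-Probability.Probability"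
begin

text \<open>An action is a triple (type, offer, time); the acting agent is implicit in its index.
A delay realisation is a sequence eps :: nat => real, eps j being the delay of action j.\<close>

datatype act_type = Propose | Accept

type_synonym 'a action = "act_type \<times> 'a \<times> real"
type_synonym 'a strategy = "'a action list \<Rightarrow> 'a action"

definition a_type :: "'a action \<Rightarrow> act_type" where "a_type a = fst a"
definition a_offer :: "'a action \<Rightarrow> 'a" where "a_offer a = fst (snd a)"
definition a_time :: "'a action \<Rightarrow> real" where "a_time a = snd (snd a)"

definition agent_of :: "nat \<Rightarrow> nat" where
  "agent_of j = (if even j then 1 else 2)"

text \<open>What agent i observes of an actual history h: its own actions with their sending
times, the other agent's actions with their reception times t_j + eps j.\<close>
definition observe :: "nat \<Rightarrow> (nat \<Rightarrow> real) \<Rightarrow> 'a action list \<Rightarrow> 'a action list" where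
  "observe i eps h =
     map (\<lambda>j. (a_type (h ! j), a_offer (h ! j),
               if agent_of j = i then a_time (h ! j) else a_time (h ! j) + eps j))
         [0..<length h]"

primrec run :: "'a strategy \<Rightarrow> 'a strategy \<Rightarrow> (nat \<Rightarrow> real) \<Rightarrow> nat \<Rightarrow> 'a action list" where
  "run s1 s2 eps 0 = []"
| "run s1 s2 eps (Suc k) =
     (let h = run s1 s2 eps k
      in h @ [(if agent_of k = 1 then s1 else s2) (observe (agent_of k) eps h)])"

definition action_at :: "'a strategy \<Rightarrow> 'a strategy \<Rightarrow> (nat \<Rightarrow> real) \<Rightarrow> nat \<Rightarrow> 'a action" where
  "action_at s1 s2 eps k = run s1 s2 eps (Suc k) ! k"

text \<open>Legal action for the agent whose turn it is, given its observed history h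
(whose last entry, if any, is the other agent's action stamped with its reception time).\<close>
definition legal_action :: "'a set \<Rightarrow> real \<Rightarrow> 'a action list \<Rightarrow> 'a action \<Rightarrow> bool" where
  "legal_action Om T h a \<longleftrightarrow>
     a_offer a \<in> Om \<and> 0 \<le> a_time a \<and> a_time a \<le> T \<and>
     (h \<noteq> [] \<longrightarrow> a_time (last h) < a_time a) \<and>
     (a_type a = Accept \<longrightarrow>
        h \<noteq> [] \<and> a_type (last h) = Propose \<and> a_offer a = a_offer (last h))"

definition legal_strategy :: "'a set \<Rightarrow> real \<Rightarrow> nat \<Rightarrow> 'a strategy \<Rightarrow> bool" where
  "legal_strategy Om T i s \<longleftrightarrow>
     (\<forall>h. agent_of (length h) = i \<longrightarrow> (h = [] \<or> a_time (last h) < T) \<longrightarrow>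
          legal_action Om T h (s h))"

definition agree_at :: "'a strategy \<Rightarrow> 'a strategy \<Rightarrow> (nat \<Rightarrow> real) \<Rightarrow> real \<Rightarrow> nat \<Rightarrow> bool" where
  "agree_at s1 s2 eps T k \<longleftrightarrow>
     (\<forall>j<k. a_type (action_at s1 s2 eps j) = Propose \<and>
            a_time (action_at s1 s2 eps j) + eps j < T) \<and>
     a_type (action_at s1 s2 eps k) = Accept \<and>
     a_time (action_at s1 s2 eps k) + eps k < T"

definition agreed_on :: "'a strategy \<Rightarrow> 'a strategy \<Rightarrow> (nat \<Rightarrow> real) \<Rightarrow> real \<Rightarrow> 'a \<Rightarrow> bool" where
  "agreed_on s1 s2 eps T w \<longleftrightarrow>
     (\<exists>k. agree_at s1 s2 eps T k \<and> a_offer (action_at s1 s2 eps k) = w)"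

definition payoff :: "('a \<Rightarrow> real) \<Rightarrow> real \<Rightarrow> 'a strategy \<Rightarrow> 'a strategy \<Rightarrow> real \<Rightarrow> (nat \<Rightarrow> real) \<Rightarrow> real" where
  "payoff u rv s1 s2 T eps =
     (if \<exists>k. agree_at s1 s2 eps T k
      then u (a_offer (action_at s1 s2 eps (LEAST k. agree_at s1 s2 eps T k)))
      else rv)"

text \<open>Expected
utility is the integral of the realised utility; it is required to be a well-defined
(measurable) random variable for the equilibrium pair, and deviations are compared
whenever their expected utility is well defined.\<close>
definition nash_equilibrium ::
  "'a set \<Rightarrow> real \<Rightarrow> (nat \<Rightarrow> real) measure \<Rightarrow> ('a \<Rightarrow> real) \<Rightarrow> ('a \<Rightarrow> real) \<Rightarrow> real \<Rightarrow> real
   \<Rightarrow> 'a strategy \<Rightarrow> 'a strategy \<Rightarrow> bool" where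
  "nash_equilibrium Om T M u1 u2 rv1 rv2 s1 s2 \<longleftrightarrow>
     legal_strategy Om T 1 s1 \<and> legal_strategy Om T 2 s2 \<and>
     payoff u1 rv1 s1 s2 T \<in> borel_measurable M \<and>
     payoff u2 rv2 s1 s2 T \<in> borel_measurable M \<and>
     (\<forall>s1'. legal_strategy Om T 1 s1' \<longrightarrow> payoff u1 rv1 s1' s2 T \<in> borel_measurable M \<longrightarrow>
        (\<integral>eps. payoff u1 rv1 s1' s2 T eps \<partial>M) \<le> (\<integral>eps. payoff u1 rv1 s1 s2 T eps \<partial>M)) \<and>
     (\<forall>s2'. legal_strategy Om T 2 s2' \<longrightarrow> payoff u2 rv2 s1 s2' T \<in> borel_measurable M \<longrightarrow>
        (\<integral>eps. payoff u2 rv2 s1 s2' T eps \<partial>M) \<le> (\<integral>eps. payoff u2 rv2 s1 s2 T eps \<partial>M))"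

definition individually_rational :: "('a \<Rightarrow> real) \<Rightarrow> ('a \<Rightarrow> real) \<Rightarrow> real \<Rightarrow> real \<Rightarrow> 'a \<Rightarrow> bool" where
  "individually_rational u1 u2 rv1 rv2 w \<longleftrightarrow> u1 w > rv1 \<and> u2 w > rv2"

definition dominates :: "('a \<Rightarrow> real) \<Rightarrow> ('a \<Rightarrow> real) \<Rightarrow> 'a \<Rightarrow> 'a \<Rightarrow> bool" where
  "dominates u1 u2 w' w \<longleftrightarrow> u1 w' \<ge> u1 w \<and> u2 w' \<ge> u2 w \<and> (u1 w' > u1 w \<or> u2 w' > u2 w)"

definition pareto_optimal :: "'a set \<Rightarrow> ('a \<Rightarrow> real) \<Rightarrow> ('a \<Rightarrow> real) \<Rightarrow> 'a \<Rightarrow> bool" where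
  "pareto_optimal Om u1 u2 w \<longleftrightarrow> \<not> (\<exists>w'\<in>Om. dominates u1 u2 w' w)"

end

theory Submission
  imports Defs
begin

definition resp :: "('a \<Rightarrow> real) \<Rightarrow> real \<Rightarrow> 'a \<Rightarrow> 'a set \<Rightarrow> real \<Rightarrow> 'a strategy" where
  "resp u c w Om T h =
     (if h = [] then (Propose, w, 0)
      else (if a_type (last h) = Propose \<and> a_offer (last h) \<in> Om \<and> c \<le> u (a_offer (last h))
            then (Accept, a_offer (last h), (max (a_time (last h)) 0 + T) / 2)
            else (Propose, w, (max (a_time (last h)) 0 + T) / 2)))"

lemma length_run[simp]: "length (run s1 s2 eps k) = k"
  by (induction k) (simp_all add: Let_def)

lemma run_nth: "j < k \<Longrightarrow> run s1 s2 eps k ! j = action_at s1 s2 eps j"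
proof (induction k)
  case 0 then show ?case by simp
next
  case (Suc k)
  show ?case
  proof (cases "j < k")
    case True
    then show ?thesis using Suc by (simp add: Let_def nth_append)
  next
    case False
    then have "j = k" using Suc by simp
    then show ?thesis by (simp add: action_at_def)
  qed
qed

lemma action_at_step:
  "action_at s1 s2 eps k = (if agent_of k = 1 then s1 else s2) (observe (agent_of k) eps (run s1 s2 eps k))"
  by (simp add: action_at_def Let_def nth_append)

lemma observe_Nil: "observe i eps h = [] \<longleftrightarrow> h = []"
  by (simp add: observe_def)

lemma length_observe[simp]: "length (observe i eps h) = length h"
  by (simp add: observe_def)

lemma last_observe:
  assumes "0 < k"
  shows "last (observe i eps (run s1 s2 eps k)) =
    (a_type (action_at s1 s2 eps (k-1)), a_offer (action_at s1 s2 eps (k-1)),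
     if agent_of (k-1) = i then a_time (action_at s1 s2 eps (k-1))
     else a_time (action_at s1 s2 eps (k-1)) + eps (k-1))"
proof -
  have "[0..<k] \<noteq> []" using assms by simp
  then have "last (observe i eps (run s1 s2 eps k)) =
     (\<lambda>j. (a_type (run s1 s2 eps k ! j), a_offer (run s1 s2 eps k ! j),
               if agent_of j = i then a_time (run s1 s2 eps k ! j) else a_time (run s1 s2 eps k ! j) + eps j)) (k-1)"
    unfolding observe_def by (simp add: last_map last_upt)
  then show ?thesis using assms by (simp add: run_nth)
qed

lemma agent_of_simps: "agent_of k = 1 \<longleftrightarrow> even k" "agent_of k = 2 \<longleftrightarrow> odd k"
  "agent_of k \<noteq> 1 \<longleftrightarrow> odd k" "agent_of k \<noteq> 2 \<longleftrightarrow> even k"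
  by (auto simp: agent_of_def)

lemma resp_legal:
  assumes "w \<in> Om" "0 < T"
  shows "legal_strategy Om T i (resp u c w Om T)"
  unfolding legal_strategy_def legal_action_def
  using assms by (auto simp: resp_def a_type_def a_offer_def a_time_def max_def)

lemma agree_at_pos:
  assumes "agree_at s1 s2 eps T k" "a_type (s1 []) = Propose"
  shows "0 < k"
proof (rule ccontr)
  assume "\<not> 0 < k"
  then have "k = 0" by simp
  then show False using assms by (simp add: agree_at_def action_at_step agent_of_def observe_def)
qed

lemma agree_at_unique:
  assumes "agree_at s1 s2 eps T k" "agree_at s1 s2 eps T k'"
  shows "k = k'"
  using assms unfolding agree_at_def
  by (metis act_type.distinct(1) linorder_neqE_nat)

lemma payoff_agree:
  assumes "agree_at s1 s2 eps T k"
  shows "payoff u rv s1 s2 T eps = u (a_offer (action_at s1 s2 eps k))"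
proof -
  have "(LEAST k. agree_at s1 s2 eps T k) = k"
    using assms agree_at_unique by (metis LeastI)
  then show ?thesis using assms unfolding payoff_def by auto
qed

lemma dev1_offer:
  assumes leg: "legal_strategy Om T 1 s1" and w: "w \<in> Om"
    and ag: "agree_at s1 (resp u c w Om T) eps T k"
  shows "a_offer (action_at s1 (resp u c w Om T) eps k) \<in> Om \<and>
         (a_offer (action_at s1 (resp u c w Om T) eps k) = w \<or>
          c \<le> u (a_offer (action_at s1 (resp u c w Om T) eps k)))"
proof -
  let ?s2 = "resp u c w Om T"
  let ?A = "action_at s1 ?s2 eps"
  have k0: "0 < k"
  proof (rule ccontr)
    assume "\<not> 0 < k"
    then have k: "k = 0" by simp
    have "legal_action Om T [] (s1 [])" using leg unfolding legal_strategy_def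
      by (drule_tac x="[]" in spec) (simp add: agent_of_def)
    moreover have "a_type (s1 []) = Accept" using ag k
      by (simp add: agree_at_def action_at_step agent_of_def observe_def)
    ultimately show False by (simp add: legal_action_def)
  qed
  have prev: "a_type (?A (k-1)) = Propose" "a_time (?A (k-1)) + eps (k-1) < T"
    using ag k0 unfolding agree_at_def by auto
  have acc: "a_type (?A k) = Accept" using ag unfolding agree_at_def by auto
  let ?h = "\<lambda>i. observe i eps (run s1 ?s2 eps k)"
  have hne: "\<And>i. ?h i \<noteq> []" using k0 by (metis observe_Nil length_run list.size(3) less_numeral_extra(3))
  show ?thesis
  proof (cases "even k")
    case True
    then have ak: "?A k = s1 (?h 1)" by (simp add: action_at_step agent_of_def)
    have odd1: "agent_of (k-1) \<noteq> 1" using True k0 by (simp add: agent_of_def)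
    have lh: "last (?h 1) = (a_type (?A (k-1)), a_offer (?A (k-1)), a_time (?A (k-1)) + eps (k-1))"
      by (subst last_observe[OF k0]) (use odd1 in presburger)
    have "legal_action Om T (?h 1) (s1 (?h 1))" using leg True lh prev
      unfolding legal_strategy_def by (drule_tac x="?h 1" in spec) (simp add: agent_of_def a_time_def)
    then have off: "a_offer (?A k) = a_offer (?A (k-1))" "a_offer (?A k) \<in> Om"
      using ak acc lh by (auto simp: legal_action_def a_offer_def)
    have "odd (k-1)" using True k0 by simp
    then have "agent_of (k-1) = 2" by (simp add: agent_of_def)
    then have ak1: "?A (k-1) = ?s2 (observe 2 eps (run s1 ?s2 eps (k-1)))"
      by (subst action_at_step) simp
    have "a_offer (?A (k-1)) = w"
      using prev(1) ak1 by (auto simp: resp_def a_type_def a_offer_def split: if_splits)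
    then show ?thesis using off by simp
  next
    case False
    then have ak: "?A k = ?s2 (?h 2)" by (simp add: action_at_step agent_of_def)
    then show ?thesis using acc hne[of 2]
      by (auto simp: resp_def a_type_def a_offer_def split: if_splits)
  qed
qed

lemma dev2_offer:
  assumes leg: "legal_strategy Om T 2 s2" and w: "w \<in> Om"
    and ag: "agree_at (resp u c w Om T) s2 eps T k"
  shows "a_offer (action_at (resp u c w Om T) s2 eps k) \<in> Om \<and>
         (a_offer (action_at (resp u c w Om T) s2 eps k) = w \<or>
          c \<le> u (a_offer (action_at (resp u c w Om T) s2 eps k)))"
proof -
  let ?s1 = "resp u c w Om T"
  let ?A = "action_at ?s1 s2 eps"
  have k0: "0 < k"
    by (rule agree_at_pos[OF ag]) (simp add: resp_def a_type_def)
  have prev: "a_type (?A (k-1)) = Propose" "a_time (?A (k-1)) + eps (k-1) < T"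
    using ag k0 unfolding agree_at_def by auto
  have acc: "a_type (?A k) = Accept" using ag unfolding agree_at_def by auto
  let ?h = "\<lambda>i. observe i eps (run ?s1 s2 eps k)"
  have hne: "\<And>i. ?h i \<noteq> []" using k0 by (metis observe_Nil length_run list.size(3) less_numeral_extra(3))
  show ?thesis
  proof (cases "odd k")
    case True
    then have ak: "?A k = s2 (?h 2)" by (simp add: action_at_step agent_of_def)
    have odd1: "agent_of (k-1) \<noteq> 2" using True k0 by (simp add: agent_of_def)
    have lh: "last (?h 2) = (a_type (?A (k-1)), a_offer (?A (k-1)), a_time (?A (k-1)) + eps (k-1))"
      by (subst last_observe[OF k0]) (use odd1 in presburger)
    have "legal_action Om T (?h 2) (s2 (?h 2))" using leg True lh prev
      unfolding legal_strategy_def by (drule_tac x="?h 2" in spec) (simp add: agent_of_def a_time_def)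
    then have off: "a_offer (?A k) = a_offer (?A (k-1))" "a_offer (?A k) \<in> Om"
      using ak acc lh by (auto simp: legal_action_def a_offer_def)
    have "even (k-1)" using True k0 by simp
    then have "agent_of (k-1) = 1" by (simp add: agent_of_def)
    then have ak1: "?A (k-1) = ?s1 (observe 1 eps (run ?s1 s2 eps (k-1)))"
      by (subst action_at_step) simp
    have "a_offer (?A (k-1)) = w"
      using prev(1) ak1 by (auto simp: resp_def a_type_def a_offer_def split: if_splits)
    then show ?thesis using off by simp
  next
    case False
    then have ak: "?A k = ?s1 (?h 1)" by (simp add: action_at_step agent_of_def)
    then show ?thesis using acc hne[of 1]
      by (auto simp: resp_def a_type_def a_offer_def split: if_splits)
  qed
qed

lemma dev_payoff:
  assumes ag: "\<forall>k. agree_at s1 s2 eps T k \<longrightarrow> a_offer (action_at s1 s2 eps k) \<in> Om \<and>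
        (a_offer (action_at s1 s2 eps k) = w \<or> v w \<le> v (a_offer (action_at s1 s2 eps k)))"
    and po: "\<not> (\<exists>x\<in>Om. v w \<le> v x \<and> u w < u x)" and rv: "rv \<le> u w" and fin: "finite Om"
  shows "payoff u rv s1 s2 T eps \<le> u w \<and> \<bar>payoff u rv s1 s2 T eps\<bar> \<le> \<bar>rv\<bar> + (\<Sum>x\<in>Om. \<bar>u x\<bar>)"
proof (cases "\<exists>k. agree_at s1 s2 eps T k")
  case True
  then obtain k where k: "agree_at s1 s2 eps T k" by blast
  let ?o = "a_offer (action_at s1 s2 eps k)"
  have p: "payoff u rv s1 s2 T eps = u ?o" by (rule payoff_agree[OF k])
  have o: "?o \<in> Om" "?o = w \<or> v w \<le> v ?o" using ag k by auto
  have "u ?o \<le> u w" using o po by force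
  moreover have "\<bar>u ?o\<bar> \<le> (\<Sum>x\<in>Om. \<bar>u x\<bar>)"
    using o(1) fin by (intro member_le_sum) auto
  ultimately show ?thesis using p by simp
next
  case False
  then have "payoff u rv s1 s2 T eps = rv" by (simp add: payoff_def)
  moreover have "0 \<le> (\<Sum>x\<in>Om. \<bar>u x\<bar>)" by (intro sum_nonneg) auto
  ultimately show ?thesis using rv by simp
qed

lemma eq_run:
  fixes u1 u2 u :: "'a \<Rightarrow> real" and T rv :: real and w :: 'a and Om :: "'a set"
  assumes "w \<in> Om"
  defines "s1 \<equiv> resp u1 (u1 w) w Om T" and "s2 \<equiv> resp u2 (u2 w) w Om T"
  shows "payoff u rv s1 s2 T eps =
     (if eps 0 < T \<and> (max (eps 0) 0 + T) / 2 + eps 1 < T then u w else rv)"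
    and "eps 0 < T \<and> (max (eps 0) 0 + T) / 2 + eps 1 < T \<Longrightarrow> agreed_on s1 s2 eps T w"
proof -
  have a0: "action_at s1 s2 eps 0 = (Propose, w, 0)"
    by (simp add: action_at_step agent_of_def observe_def s1_def resp_def)
  have r1: "run s1 s2 eps 1 = [(Propose, w, 0)]"
    using a0 by (simp add: action_at_def)
  have a1: "action_at s1 s2 eps 1 = (Accept, w, (max (eps 0) 0 + T) / 2)"
    using assms(1) by (subst action_at_step) (simp add: agent_of_def r1 observe_def s1_def s2_def resp_def
        a_type_def a_offer_def a_time_def)
  let ?P = "eps 0 < T \<and> (max (eps 0) 0 + T) / 2 + eps 1 < T"
  have ag: "agree_at s1 s2 eps T k \<longleftrightarrow> k = 1 \<and> ?P" for k
  proof
    assume h: "agree_at s1 s2 eps T k"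
    have "k \<noteq> 0" using h a0 by (metis agree_at_def a_type_def act_type.distinct(1) fst_conv)
    moreover have "\<not> 1 < k" using h a1 by (auto simp: agree_at_def a_type_def)
    ultimately have "k = 1" by simp
    then show "k = 1 \<and> ?P" using h a0 a1 by (simp add: agree_at_def a_type_def a_time_def)
  next
    assume "k = 1 \<and> ?P"
    then show "agree_at s1 s2 eps T k" using a0 a1 by (simp add: agree_at_def a_type_def a_time_def)
  qed
  show "payoff u rv s1 s2 T eps = (if ?P then u w else rv)"
  proof (cases ?P)
    case True
    then have "agree_at s1 s2 eps T 1" using ag by simp
    then show ?thesis using True payoff_agree[of s1 s2 eps T 1 u rv] a1 by (simp add: a_offer_def)
  next
    case False
    then have "\<not> (\<exists>k. agree_at s1 s2 eps T k)" using ag by blast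
    then show ?thesis using False by (auto simp add: payoff_def)
  qed
  show "?P \<Longrightarrow> agreed_on s1 s2 eps T w"
    unfolding agreed_on_def using ag a1 by (intro exI[of _ 1]) (simp add: a_offer_def)
qed

theorem mainTheorem1:
  fixes Om :: "'a set" and u1 u2 :: "'a \<Rightarrow> real" and rv1 rv2 :: real
    and M :: "(nat \<Rightarrow> real) measure"
  assumes "finite Om"
    and "prob_space M"
    and "sets M = sets (\<Pi>\<^sub>M j\<in>(UNIV :: nat set). (borel :: real measure))"
    and "\<exists>Delta. AE eps in M. \<forall>j. 0 < eps j \<and> eps j \<le> Delta"
  shows "\<exists>T0. \<forall>T \<ge> T0. \<forall>w \<in> Om.
           pareto_optimal Om u1 u2 w \<and> individually_rational u1 u2 rv1 rv2 w \<longrightarrow>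
           (\<exists>s1 s2. nash_equilibrium Om T M u1 u2 rv1 rv2 s1 s2 \<and>
              (AE eps in M. \<exists>w'\<in>Om. agreed_on s1 s2 eps T w' \<and>
                                     u1 w' = u1 w \<and> u2 w' = u2 w))"
proof -
  obtain Delta where D: "AE eps in M. \<forall>j. 0 < eps j \<and> eps j \<le> Delta" using assms(4) by blast
  interpret P: prob_space M by (rule assms(2))
  have comp[measurable]: "(\<lambda>x. x j) \<in> borel_measurable M" for j
  proof -
    have "(\<lambda>x. x j) \<in> measurable (\<Pi>\<^sub>M j\<in>(UNIV :: nat set). (borel :: real measure)) borel"
      by (rule measurable_component_singleton) simp
    then show ?thesis by (subst measurable_cong_sets[OF assms(3) refl])
  qed
  show ?thesis
  proof (intro exI[of _ "3 * \<bar>Delta\<bar> + 1"] allI impI ballI)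
    fix T w
    assume T: "3 * \<bar>Delta\<bar> + 1 \<le> T" and w: "w \<in> Om"
      and pw: "pareto_optimal Om u1 u2 w \<and> individually_rational u1 u2 rv1 rv2 w"
    have T0: "0 < T" using T by simp
    have po1: "\<not> (\<exists>x\<in>Om. u2 w \<le> u2 x \<and> u1 w < u1 x)"
      using pw by (auto simp: pareto_optimal_def dominates_def)
    have po2: "\<not> (\<exists>x\<in>Om. u1 w \<le> u1 x \<and> u2 w < u2 x)"
      using pw by (auto simp: pareto_optimal_def dominates_def)
    have ir: "rv1 \<le> u1 w" "rv2 \<le> u2 w" using pw by (auto simp: individually_rational_def)
    define s1 where "s1 = resp u1 (u1 w) w Om T"
    define s2 where "s2 = resp u2 (u2 w) w Om T"
    define P where "P = (\<lambda>eps::nat\<Rightarrow>real. eps 0 < T \<and> (max (eps 0) 0 + T) / 2 + eps 1 < T)"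
    have AEP: "AE eps in M. P eps"
      using D
    proof eventually_elim
      case (elim eps)
      then have "0 < eps 0" "eps 0 \<le> Delta" "eps 1 \<le> Delta" by auto
      then show ?case using T unfolding P_def by (auto simp: max_def field_simps)
    qed
    have measP: "(\<lambda>eps. if P eps then a else b) \<in> borel_measurable M" for a b :: real
      unfolding P_def by measurable
    have pay: "payoff u rv s1 s2 T = (\<lambda>eps. if P eps then u w else rv)" for u rv
      using eq_run(1)[OF w] unfolding s1_def s2_def P_def by (intro ext) simp
    have ex: "(\<integral>eps. payoff u rv s1 s2 T eps \<partial>M) = u w" for u rv
    proof -
      have "(\<integral>eps. payoff u rv s1 s2 T eps \<partial>M) = (\<integral>eps. u w \<partial>M)"
      proof -
        have "AE eps in M. (if P eps then u w else rv) = u w" using AEP by eventually_elim simp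
        then show ?thesis unfolding pay using measP by (intro integral_cong_AE) auto
      qed
      then show ?thesis by (simp add: P.prob_space)
    qed
    have AEag: "AE eps in M. \<exists>w'\<in>Om. agreed_on s1 s2 eps T w' \<and> u1 w' = u1 w \<and> u2 w' = u2 w"
      using AEP
    proof eventually_elim
      case (elim eps)
      have "agreed_on s1 s2 eps T w"
        unfolding s1_def s2_def by (rule eq_run(2)[OF w]) (use elim in \<open>simp add: P_def\<close>)
      then show ?case using w by blast
    qed
    let ?B1 = "\<bar>rv1\<bar> + (\<Sum>x\<in>Om. \<bar>u1 x\<bar>)"
    let ?B2 = "\<bar>rv2\<bar> + (\<Sum>x\<in>Om. \<bar>u2 x\<bar>)"
    have dev1: "(\<integral>eps. payoff u1 rv1 s1' s2 T eps \<partial>M) \<le> (\<integral>eps. payoff u1 rv1 s1 s2 T eps \<partial>M)"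
      if leg: "legal_strategy Om T 1 s1'" and m: "payoff u1 rv1 s1' s2 T \<in> borel_measurable M" for s1'
    proof -
      have b: "payoff u1 rv1 s1' s2 T eps \<le> u1 w \<and> \<bar>payoff u1 rv1 s1' s2 T eps\<bar> \<le> ?B1" for eps
        using dev_payoff[OF _ po1 ir(1) assms(1)] dev1_offer[OF leg w] unfolding s2_def by blast
      have "integrable M (payoff u1 rv1 s1' s2 T)"
        using b m by (intro P.integrable_const_bound[where B="?B1"]) auto
      then have "(\<integral>eps. payoff u1 rv1 s1' s2 T eps \<partial>M) \<le> (\<integral>eps. u1 w \<partial>M)"
        using b by (intro integral_mono) auto
      then show ?thesis using ex by (simp add: P.prob_space)
    qed
    have dev2: "(\<integral>eps. payoff u2 rv2 s1 s2' T eps \<partial>M) \<le> (\<integral>eps. payoff u2 rv2 s1 s2 T eps \<partial>M)"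
      if leg: "legal_strategy Om T 2 s2'" and m: "payoff u2 rv2 s1 s2' T \<in> borel_measurable M" for s2'
    proof -
      have b: "payoff u2 rv2 s1 s2' T eps \<le> u2 w \<and> \<bar>payoff u2 rv2 s1 s2' T eps\<bar> \<le> ?B2" for eps
        using dev_payoff[OF _ po2 ir(2) assms(1)] dev2_offer[OF leg w] unfolding s1_def by blast
      have "integrable M (payoff u2 rv2 s1 s2' T)"
        using b m by (intro P.integrable_const_bound[where B="?B2"]) auto
      then have "(\<integral>eps. payoff u2 rv2 s1 s2' T eps \<partial>M) \<le> (\<integral>eps. u2 w \<partial>M)"
        using b by (intro integral_mono) auto
      then show ?thesis using ex by (simp add: P.prob_space)
    qed
    have "nash_equilibrium Om T M u1 u2 rv1 rv2 s1 s2"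
      unfolding nash_equilibrium_def
      using resp_legal[OF w T0] dev1 dev2 measP pay unfolding s1_def s2_def by auto
    then show "\<exists>s1 s2. nash_equilibrium Om T M u1 u2 rv1 rv2 s1 s2 \<and>
              (AE eps in M. \<exists>w'\<in>Om. agreed_on s1 s2 eps T w' \<and> u1 w' = u1 w \<and> u2 w' = u2 w)"
      using AEag by blast
  qed
qed

end
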